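(* Let $\{\psi^t\}$ be any feasible family of sub-problem potentials and let $|V^0| = \max_{t \in \mathcal{T}} |V^t|$. Define the simultaneously updated potentials $$\hat\psi^t_i(l) = \psi^t_i(l) - \frac{1}{|V^0|}\Big(\mu^t_i(l) - \tfrac{1}{|\mathcal{T}(i)|}\sum_{\bar t \in \mathcal{T}(i)} \mu^{\bar t}_i(l)\Big), \qquad \forall i \in V,\ t \in \mathcal{T}(i),\ l \in \mathcal{L},$$ where all max-marginals are computed with the pre-update potentials $\{\psi^t\}$. Then $\{\hat\psi^t\}$ is feasible and $D(\{\hat\psi^t\}) \le D(\{\psi^t\})$.
   Context: Let $G=(V,E)$ be a finite graph and $\mathcal{L}=\{1,\dots,L\}$ a finite label set. Unary scores $\psi_i \in \mathbb{R}^{\mathcal{L}}$ ($i \in V$) and pairwise scores $\phi_{ij} \in \mathbb{R}^{\mathcal{L}\times\mathcal{L}}$ ($ij \in E$) are given. Let $\mathcal{T}$ be a finite collection of trees (sub-problems), each tree $t$ being a subgraph of $G$ with vertex set $V^t$ and edge set $E^t \subseteq E$, such that every vertex of $V$ lies in at least one tree and every edge of $E$ lies in exactly one tree. Write $\mathcal{T}(i) = \{t \in \mathcal{T} : i \in V^t\}$. Each sub-problem $t$ carries unary potentials $\psi^t_i \in \mathbb{R}^{\mathcal{L}}$ for $i \in V^t$; the family $\{\psi^t\}$ is called feasible if $\sum_{t \in \mathcal{T}(i)} \psi^t_i = \psi_i$ for every $i \in V$. For a labeling $x : V^t \to \mathcal{L}$ define the tree energy $E^t(x) = \sum_{i \in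 V^t} \psi^t_i(x_i) + \sum_{ij \in E^t} \phi_{ij}(x_i,x_j)$. The max-energy of sub-problem $t$ is $\mu^t = \max_{x : V^t \to \mathcal{L}} E^t(x)$, and for $i \in V^t$, $l \in \mathcal{L}$ the max-marginal is $\mu^t_i(l) = \max_{x : V^t\to\mathcal{L},\ x_i = l} E^t(x)$. The dual objective is $D(\{\psi^t\}) = \sum_{t\in\mathcal{T}} \mu^t$. *)

theory Defs
  imports Complex_Main "HOL-Library.FuncSet"
begin

text \<open>Edges are ordered pairs (i,j) of vertices; a (simple, undirected) graph stores each
edge in one orientation.  Labels are the elements of a finite type 'l.\<close>

definition is_tree :: "'v set \<Rightarrow> ('v \<times> 'v) set \<Rightarrow> bool" where
  "is_tree Vt Et \<longleftrightarrow> finite Vt \<and> finite Et \<and> Vt \<noteq> {} \<and>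
     (\<forall>(i,j)\<in>Et. i \<in> Vt \<and> j \<in> Vt) \<and>
     (\<forall>i\<in>Vt. \<forall>j\<in>Vt. (\<lambda>a b. (a,b) \<in> Et \<or> (b,a) \<in> Et)\<^sup>*\<^sup>* i j) \<and>
     card Et = card Vt - 1"

definition trees_of :: "'t set \<Rightarrow> ('t \<Rightarrow> 'v set) \<Rightarrow> 'v \<Rightarrow> 't set" where
  "trees_of T Vt i = {t \<in> T. i \<in> Vt t}"

definition feasible ::
  "'v set \<Rightarrow> 't set \<Rightarrow> ('t \<Rightarrow> 'v set) \<Rightarrow> ('v \<Rightarrow> 'l \<Rightarrow> real) \<Rightarrow> ('t \<Rightarrow> 'v \<Rightarrow> 'l \<Rightarrow> real) \<Rightarrow> bool" where
  "feasible V T Vt \<psi> \<psi>t \<longleftrightarrow> (\<forall>i\<in>V. \<forall>l. (\<Sum>t\<in>trees_of T Vt i. \<psi>t t i l) = \<psi> i l)"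

definition tree_energy ::
  "('t \<Rightarrow> 'v set) \<Rightarrow> ('t \<Rightarrow> ('v \<times> 'v) set) \<Rightarrow> ('v \<times> 'v \<Rightarrow> 'l \<Rightarrow> 'l \<Rightarrow> real)
   \<Rightarrow> ('t \<Rightarrow> 'v \<Rightarrow> 'l \<Rightarrow> real) \<Rightarrow> 't \<Rightarrow> ('v \<Rightarrow> 'l) \<Rightarrow> real" where
  "tree_energy Vt Et \<phi> \<psi>t t x =
     (\<Sum>i\<in>Vt t. \<psi>t t i (x i)) + (\<Sum>e\<in>Et t. \<phi> e (x (fst e)) (x (snd e)))"

definition max_energy ::
  "('t \<Rightarrow> 'v set) \<Rightarrow> ('t \<Rightarrow> ('v \<times> 'v) set) \<Rightarrow> ('v \<times> 'v \<Rightarrow> 'l \<Rightarrow> 'l \<Rightarrow> real)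
   \<Rightarrow> ('t \<Rightarrow> 'v \<Rightarrow> 'l \<Rightarrow> real) \<Rightarrow> 't \<Rightarrow> real" where
  "max_energy Vt Et \<phi> \<psi>t t =
     Max (tree_energy Vt Et \<phi> \<psi>t t ` (Vt t \<rightarrow>\<^sub>E (UNIV :: 'l set)))"

definition max_marginal ::
  "('t \<Rightarrow> 'v set) \<Rightarrow> ('t \<Rightarrow> ('v \<times> 'v) set) \<Rightarrow> ('v \<times> 'v \<Rightarrow> 'l \<Rightarrow> 'l \<Rightarrow> real)
   \<Rightarrow> ('t \<Rightarrow> 'v \<Rightarrow> 'l \<Rightarrow> real) \<Rightarrow> 't \<Rightarrow> 'v \<Rightarrow> 'l \<Rightarrow> real" where
  "max_marginal Vt Et \<phi> \<psi>t t i l =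
     Max (tree_energy Vt Et \<phi> \<psi>t t ` {x \<in> Vt t \<rightarrow>\<^sub>E (UNIV :: 'l set). x i = l})"

definition dual_obj ::
  "'t set \<Rightarrow> ('t \<Rightarrow> 'v set) \<Rightarrow> ('t \<Rightarrow> ('v \<times> 'v) set) \<Rightarrow> ('v \<times> 'v \<Rightarrow> 'l \<Rightarrow> 'l \<Rightarrow> real)
   \<Rightarrow> ('t \<Rightarrow> 'v \<Rightarrow> 'l \<Rightarrow> real) \<Rightarrow> real" where
  "dual_obj T Vt Et \<phi> \<psi>t = (\<Sum>t\<in>T. max_energy Vt Et \<phi> \<psi>t t)"

text \<open>Simultaneous update; max-marginals use the pre-update potentials.
  Only the values for i \<in> V, t \<in> T(i) matter.\<close>
definition updated_pot ::
  "'t set \<Rightarrow> ('t \<Rightarrow> 'v set) \<Rightarrow> ('t \<Rightarrow> ('v \<times> 'v) set) \<Rightarrow> ('v \<times> 'v \<Rightarrow> 'l \<Rightarrow> 'l \<Rightarrow> real)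
   \<Rightarrow> ('t \<Rightarrow> 'v \<Rightarrow> 'l \<Rightarrow> real) \<Rightarrow> 't \<Rightarrow> 'v \<Rightarrow> 'l \<Rightarrow> real" where
  "updated_pot T Vt Et \<phi> \<psi>t t i l =
     \<psi>t t i l - (1 / real (Max (card ` Vt ` T))) *
       (max_marginal Vt Et \<phi> \<psi>t t i l
        - (1 / real (card (trees_of T Vt i))) *
          (\<Sum>s\<in>trees_of T Vt i. max_marginal Vt Et \<phi> \<psi>t s i l))"

end

theory Submission
  imports Defs
begin

lemma finPiE: "finite (A::'a set) \<Longrightarrow> finite (A \<rightarrow>\<^sub>E (UNIV::'l::finite set))"
  by (rule finite_PiE) auto

lemma mm_ge:
  assumes "finite (Vt t)" "x \<in> Vt t \<rightarrow>\<^sub>E (UNIV::'l::finite set)" 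
  shows "tree_energy Vt Et \<phi> \<psi>t t x \<le> max_marginal Vt Et \<phi> \<psi>t t i (x i)"
  unfolding max_marginal_def
  by (rule Max_ge) (use assms in \<open>auto intro: finPiE finite_subset[OF _ finPiE]\<close>)

lemma me_ge:
  assumes "finite (Vt t)" "x \<in> Vt t \<rightarrow>\<^sub>E (UNIV::'l::finite set)" 
  shows "tree_energy Vt Et \<phi> \<psi>t t x \<le> max_energy Vt Et \<phi> \<psi>t t"
  unfolding max_energy_def
  by (rule Max_ge) (use assms in \<open>auto intro: finPiE finite_subset[OF _ finPiE]\<close>)

lemma mm_le:
  assumes "finite (Vt t)" "i \<in> Vt t"
  shows "max_marginal Vt Et \<phi> \<psi>t t i (l::'l::finite) \<le> max_energy Vt Et \<phi> \<psi>t t"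
proof -
  let ?x = "\<lambda>j. if j \<in> Vt t then l else undefined"
  have "?x \<in> {x \<in> Vt t \<rightarrow>\<^sub>E (UNIV :: 'l set). x i = l}" using assms by auto
  then show ?thesis unfolding max_marginal_def max_energy_def
    by (intro Max_mono) (use assms in \<open>auto intro: finPiE finite_subset[OF _ finPiE]\<close>)
qed

lemma me_le:
  assumes "finite (Vt t)" "\<And>x. x \<in> Vt t \<rightarrow>\<^sub>E (UNIV::'l::finite set) \<Longrightarrow> tree_energy Vt Et \<phi> \<psi>t t x \<le> C"
  shows "max_energy Vt Et \<phi> \<psi>t t \<le> C"
proof -
  have ne: "Vt t \<rightarrow>\<^sub>E (UNIV::'l set) \<noteq> {}" by (simp add: PiE_eq_empty_iff)
  show ?thesis unfolding max_energy_def
    by (rule Max.boundedI) (use assms ne in \<open>auto intro: finPiE finite_subset[OF _ finPiE]\<close>)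
qed

theorem theorem1:
  fixes V :: "'v set" and E :: "('v \<times> 'v) set"
    and T :: "'t set" and Vt :: "'t \<Rightarrow> 'v set" and Et :: "'t \<Rightarrow> ('v \<times> 'v) set"
    and \<psi> :: "'v \<Rightarrow> 'l::finite \<Rightarrow> real" and \<phi> :: "'v \<times> 'v \<Rightarrow> 'l \<Rightarrow> 'l \<Rightarrow> real"
    and \<psi>t :: "'t \<Rightarrow> 'v \<Rightarrow> 'l \<Rightarrow> real"
  assumes finV: "finite V"
    and graph: "E \<subseteq> V \<times> V" "\<forall>(i,j)\<in>E. i \<noteq> j \<and> (j,i) \<notin> E"
    and finT: "finite T"
    and sub: "\<forall>t\<in>T. Vt t \<subseteq> V \<and> Et t \<subseteq> E \<and> is_tree (Vt t) (Et t)"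
    and cover_V: "\<forall>i\<in>V. \<exists>t\<in>T. i \<in> Vt t"
    and cover_E: "\<forall>e\<in>E. \<exists>!t. t \<in> T \<and> e \<in> Et t"
    and feas: "feasible V T Vt \<psi> \<psi>t"
  shows "feasible V T Vt \<psi> (updated_pot T Vt Et \<phi> \<psi>t)
       \<and> dual_obj T Vt Et \<phi> (updated_pot T Vt Et \<phi> \<psi>t) \<le> dual_obj T Vt Et \<phi> \<psi>t"
proof -
  define c where "c = 1 / real (Max (card ` Vt ` T))"
  define mu where "mu = max_energy Vt Et \<phi> \<psi>t"
  define mm where "mm = max_marginal Vt Et \<phi> \<psi>t"
  define A where "A = (\<lambda>i. 1 / real (card (trees_of T Vt i)))"
  define S where "S = (\<lambda>i l. \<Sum>s\<in>trees_of T Vt i. mm s i l)"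
  define \<psi>' where "\<psi>' = updated_pot T Vt Et \<phi> \<psi>t"
  have upd: "\<psi>' t i l = \<psi>t t i l - c * (mm t i l - A i * S i l)" for t i l
    unfolding \<psi>'_def updated_pot_def c_def mm_def A_def S_def by simp
  have finVt: "t \<in> T \<Longrightarrow> finite (Vt t)" for t using sub by (auto simp: is_tree_def)
  have finTi: "finite (trees_of T Vt i)" for i using finT by (simp add: trees_of_def)
  have cardTi: "i \<in> V \<Longrightarrow> card (trees_of T Vt i) > 0" for i
    using cover_V finTi by (fastforce simp: trees_of_def card_gt_0_iff)
  have part1: "feasible V T Vt \<psi> \<psi>'"
    unfolding feasible_def
  proof (intro ballI allI)
    fix i l assume i: "i \<in> V"
    have "(\<Sum>t\<in>trees_of T Vt i. \<psi>' t i l) = (\<Sum>t\<in>trees_of T Vt i. \<psi>t t i l)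
        - c * ((\<Sum>t\<in>trees_of T Vt i. mm t i l) - real (card (trees_of T Vt i)) * (A i * S i l))"
      by (simp add: upd sum_subtractf sum_distrib_left right_diff_distrib)
    also have "real (card (trees_of T Vt i)) * (A i * S i l) = S i l"
      using cardTi[OF i] by (simp add: A_def)
    finally show "(\<Sum>t\<in>trees_of T Vt i. \<psi>' t i l) = \<psi> i l"
      using feas i by (simp add: feasible_def S_def)
  qed
  show ?thesis
  proof (cases "T = {}")
    case True then show ?thesis using part1 by (simp add: \<psi>'_def dual_obj_def)
  next
    case False
    have cardle: "t \<in> T \<Longrightarrow> real (card (Vt t)) \<le> 1 / c" for t
      using finT by (simp add: c_def)
    have cpos: "c > 0"
    proof -
      obtain t where t: "t \<in> T" using False by blast
      have "Vt t \<noteq> {}" using sub t by (auto simp: is_tree_def)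
      then have "card (Vt t) > 0" using finVt[OF t] by (simp add: card_gt_0_iff)
      moreover have "card (Vt t) \<le> Max (card ` Vt ` T)" using t finT by simp
      ultimately show ?thesis by (simp add: c_def)
    qed
    define B where "B = (\<lambda>t. \<Sum>i\<in>Vt t. A i * (\<Sum>s\<in>trees_of T Vt i. mu s))"
    have bound: "max_energy Vt Et \<phi> \<psi>' t \<le> (1 - c * real (card (Vt t))) * mu t + c * B t"
      if t: "t \<in> T" for t
    proof (rule me_le[where Vt=Vt and t=t, OF finVt[OF t]])
      fix x :: "'v \<Rightarrow> 'l" assume x: "x \<in> Vt t \<rightarrow>\<^sub>E UNIV"
      let ?E = "tree_energy Vt Et \<phi> \<psi>t t x"
      have eq: "tree_energy Vt Et \<phi> \<psi>' t x = ?E - c * (\<Sum>i\<in>Vt t. mm t i (x i))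
          + c * (\<Sum>i\<in>Vt t. A i * S i (x i))"
        by (simp add: tree_energy_def upd sum_subtractf sum_distrib_left right_diff_distrib)
      have s1: "real (card (Vt t)) * ?E \<le> (\<Sum>i\<in>Vt t. mm t i (x i))"
        using sum_bounded_below[of "Vt t" ?E "\<lambda>i. mm t i (x i)"] mm_ge[where Vt=Vt and t=t and Et=Et and \<phi>=\<phi> and \<psi>t=\<psi>t, OF finVt[OF t] x]
        by (simp add: mm_def)
      have s2: "(\<Sum>i\<in>Vt t. A i * S i (x i)) \<le> B t"
        unfolding B_def
      proof (rule sum_mono)
        fix i assume i: "i \<in> Vt t"
        have "S i (x i) \<le> (\<Sum>s\<in>trees_of T Vt i. mu s)"
          unfolding S_def by (rule sum_mono)
            (use mm_le finVt in \<open>fastforce simp: mm_def mu_def trees_of_def\<close>)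
        moreover have "A i \<ge> 0" by (simp add: A_def)
        ultimately show "A i * S i (x i) \<le> A i * (\<Sum>s\<in>trees_of T Vt i. mu s)"
          by (rule mult_left_mono)
      qed
      have Emu: "?E \<le> mu t" using me_ge[where Vt=Vt and t=t and Et=Et and \<phi>=\<phi> and \<psi>t=\<psi>t, OF finVt[OF t] x] by (simp add: mu_def)
      have cc: "1 - c * real (card (Vt t)) \<ge> 0"
        using cardle[OF t] cpos by (simp add: field_simps)
      have "tree_energy Vt Et \<phi> \<psi>' t x \<le> ?E - c * (real (card (Vt t)) * ?E) + c * B t"
        unfolding eq using s1 s2 cpos
        by (smt (verit) mult_left_mono)
      also have "\<dots> = (1 - c * real (card (Vt t))) * ?E + c * B t" by (simp add: algebra_simps)
      also have "\<dots> \<le> (1 - c * real (card (Vt t))) * mu t + c * B t"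
        using mult_left_mono[OF Emu cc] by simp
      finally show "tree_energy Vt Et \<phi> \<psi>' t x \<le> (1 - c * real (card (Vt t))) * mu t + c * B t" .
    qed
    have swap: "(\<Sum>t\<in>T. B t) = (\<Sum>t\<in>T. real (card (Vt t)) * mu t)"
    proof -
      have VtV: "t \<in> T \<Longrightarrow> Vt t = {i \<in> V. i \<in> Vt t}" for t using sub by auto
      have "(\<Sum>t\<in>T. B t) = (\<Sum>t\<in>T. \<Sum>i\<in>{i \<in> V. i \<in> Vt t}. A i * (\<Sum>s\<in>trees_of T Vt i. mu s))"
        unfolding B_def by (rule sum.cong) (use VtV in auto)
      also have "\<dots> = (\<Sum>i\<in>V. \<Sum>t\<in>{t \<in> T. i \<in> Vt t}. A i * (\<Sum>s\<in>trees_of T Vt i. mu s))"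
        by (rule sum.swap_restrict[OF finT finV])
      also have "\<dots> = (\<Sum>i\<in>V. \<Sum>s\<in>trees_of T Vt i. mu s)"
      proof (rule sum.cong[OF refl])
        fix i assume i: "i \<in> V"
        show "(\<Sum>t\<in>{t \<in> T. i \<in> Vt t}. A i * (\<Sum>s\<in>trees_of T Vt i. mu s)) = (\<Sum>s\<in>trees_of T Vt i. mu s)"
          using cardTi[OF i] by (simp add: A_def trees_of_def)
      qed
      also have "\<dots> = (\<Sum>i\<in>V. \<Sum>s\<in>{s \<in> T. i \<in> Vt s}. mu s)" by (simp add: trees_of_def)
      also have "\<dots> = (\<Sum>s\<in>T. \<Sum>i\<in>{i \<in> V. i \<in> Vt s}. mu s)"
        using sum.swap_restrict[OF finT finV, of "\<lambda>s i. mu s" "\<lambda>s i. i \<in> Vt s"] by simp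
      also have "\<dots> = (\<Sum>s\<in>T. real (card (Vt s)) * mu s)"
        by (rule sum.cong) (use VtV in auto)
      finally show ?thesis .
    qed
    have "dual_obj T Vt Et \<phi> \<psi>' \<le> (\<Sum>t\<in>T. (1 - c * real (card (Vt t))) * mu t + c * B t)"
      unfolding dual_obj_def by (rule sum_mono) (rule bound)
    also have "\<dots> = (\<Sum>t\<in>T. mu t) - c * (\<Sum>t\<in>T. real (card (Vt t)) * mu t) + c * (\<Sum>t\<in>T. B t)"
      by (simp add: algebra_simps sum.distrib sum_subtractf sum_distrib_left)
    also have "\<dots> = dual_obj T Vt Et \<phi> \<psi>t" using swap by (simp add: dual_obj_def mu_def)
    finally show ?thesis using part1 by (simp add: \<psi>'_def)
  qed
qed

end
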